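(* For every $c\in(0,1]$ and every $d$ with $1\le d<\frac{1}{1-c}$ (any $d\ge 1$ if $c=1$) and every $\delta>0$, there exists an instance of the submodular partition problem with two users, both of whose valuation functions have curvature exactly $c$, such that the run of GREEDY-M satisfies $\max_i\{c_{u_i}+1/d_i^p\}=c+\frac1d$ and $$\frac{Z(G)}{Z(\Omega)}\ \le\ \frac{1}{c+\frac1d}+\delta .$$ Thus the lower bound $\min\bigl(1,1/\max_i\{c_{u_i}+1/d_i^p\}\bigr)$ on $Z(G)/Z(\Omega)$ for GREEDY-M cannot be improved in general.
   Context: Submodular partition problem: resources $\mathcal{R}$ ($|\mathcal{R}|=n$), users $\mathcal{U}$, monotone submodular $Z_u:2^{\mathcal{R}}\to\mathbb{R}$ with $Z_u(\emptyset)=0$; $Z(S)=\sum_u Z_u(S_u)$ with $S_u=\{r:(u,r)\in S\}$; a partition assigns each resource to exactly one user; $\Omega$ is an optimal partition. $\rho^u_r(S)=Z_u(S_u\cup\{r\})-Z_u(S_u)$. Curvature $c_u=1-\min\{(Z_u(S\cup\{r\})-Z_u(S))/Z_u(\{r\}): S\subseteq\mathcal{R}, r\notin S, Z_u(\{r\})>0\}$. GREEDY-M: $G^0=\emptyset$; at iteration $i=1,\dots,n$ pick, among pairs $(u,r)$ with $r$ unallocated in $G^{i-1}$, one maximizing $\rho^u_r(G^{i-1})$; ties broken by minimizing $c_u+1/d_i(u,r)$ where $d_i(u,r)=\rho^u_r(G^{i-1})/\max_{u'\ne u}\rho^{u'}_r(G^{i-1})$, then by a fixed index; call it $(u_i,r_i)$,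 $G^i=G^{i-1}\cup\{(u_i,r_i)\}$, $G=G^n$; $d_i^p=d_i(u_i,r_i)$. *)

theory Defs
  imports Main "HOL.Real"
begin

definition alloc_of :: "(nat \<times> nat) set \<Rightarrow> nat \<Rightarrow> nat set" where
  "alloc_of S u = {r. (u, r) \<in> S}"

definition total_val :: "nat set \<Rightarrow> (nat \<Rightarrow> nat set \<Rightarrow> real) \<Rightarrow> (nat \<times> nat) set \<Rightarrow> real" where
  "total_val U Z S = (\<Sum>u\<in>U. Z u (alloc_of S u))"

definition mono_submod :: "nat set \<Rightarrow> (nat set \<Rightarrow> real) \<Rightarrow> bool" where
  "mono_submod R f \<longleftrightarrow> f {} = 0
     \<and> (\<forall>S T. S \<subseteq> T \<and> T \<subseteq> R \<longrightarrow> f S \<le> f T)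
     \<and> (\<forall>S T r. S \<subseteq> T \<and> T \<subseteq> R \<and> r \<in> R \<and> r \<notin> T \<longrightarrow>
            f (insert r T) - f T \<le> f (insert r S) - f S)"

definition curvature :: "nat set \<Rightarrow> (nat set \<Rightarrow> real) \<Rightarrow> real" where
  "curvature R f = 1 - Min {(f (insert r S) - f S) / f {r} | S r.
       S \<subseteq> R \<and> r \<in> R \<and> r \<notin> S \<and> f {r} > 0}"

definition is_partition :: "nat set \<Rightarrow> nat set \<Rightarrow> (nat \<times> nat) set \<Rightarrow> bool" where
  "is_partition U R S \<longleftrightarrow> S \<subseteq> U \<times> R \<and> (\<forall>r\<in>R. \<exists>!u. (u, r) \<in> S)"

definition is_optimal :: "nat set \<Rightarrow> nat set \<Rightarrow> (nat \<Rightarrow> nat set \<Rightarrow> real) \<Rightarrow> (nat \<times> nat) set \<Rightarrow> bool" where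
  "is_optimal U R Z \<Omega> \<longleftrightarrow> is_partition U R \<Omega>
     \<and> (\<forall>S. is_partition U R S \<longrightarrow> total_val U Z S \<le> total_val U Z \<Omega>)"

definition marg :: "(nat \<Rightarrow> nat set \<Rightarrow> real) \<Rightarrow> (nat \<times> nat) set \<Rightarrow> nat \<Rightarrow> nat \<Rightarrow> real" where
  "marg Z S u r = Z u (insert r (alloc_of S u)) - Z u (alloc_of S u)"

text \<open>d_i(u,r) = rho^u_r / max over u' \<noteq> u of rho^{u'}_r.  With Isabelle's x/0 = 0, a zero
  denominator gives 1/d = 0, matching the convention 1/\<infinity> = 0.\<close>
definition dratio :: "nat set \<Rightarrow> (nat \<Rightarrow> nat set \<Rightarrow> real) \<Rightarrow> (nat \<times> nat) set \<Rightarrow> nat \<Rightarrow> nat \<Rightarrow> real" where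
  "dratio U Z S u r = marg Z S u r / Max ((\<lambda>u'. marg Z S u' r) ` (U - {u}))"

definition tie_key :: "nat set \<Rightarrow> nat set \<Rightarrow> (nat \<Rightarrow> nat set \<Rightarrow> real) \<Rightarrow> (nat \<times> nat) set \<Rightarrow> nat \<Rightarrow> nat \<Rightarrow> real" where
  "tie_key U R Z S u r = curvature R (Z u) + 1 / dratio U Z S u r"

definition allocated :: "(nat \<times> nat) set \<Rightarrow> nat set" where
  "allocated S = snd ` S"

definition prefix :: "(nat \<Rightarrow> nat) \<Rightarrow> (nat \<Rightarrow> nat) \<Rightarrow> nat \<Rightarrow> (nat \<times> nat) set" where
  "prefix us rs i = {(us j, rs j) | j. 1 \<le> j \<and> j \<le> i}"

text \<open>(us i, rs i), i = 1..n, is the run of GREEDY-M: at each step the chosen pair is the unique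
  best unallocated pair w.r.t. (max marginal gain, then min tie_key, then the fixed index,
  which is the lexicographic order on (user, resource)).\<close>
definition greedy_m_run :: "nat set \<Rightarrow> nat set \<Rightarrow> (nat \<Rightarrow> nat set \<Rightarrow> real) \<Rightarrow> (nat \<Rightarrow> nat) \<Rightarrow> (nat \<Rightarrow> nat) \<Rightarrow> bool" where
  "greedy_m_run U R Z us rs \<longleftrightarrow>
    (\<forall>i\<in>{1..card R}.
       let Gp = prefix us rs (i - 1) in
       us i \<in> U \<and> rs i \<in> R \<and> rs i \<notin> allocated Gp \<and>
       (\<forall>u\<in>U. \<forall>r\<in>R - allocated Gp. (u, r) \<noteq> (us i, rs i) \<longrightarrow>
          marg Z Gp u r < marg Z Gp (us i) (rs i)
          \<or> (marg Z Gp u r = marg Z Gp (us i) (rs i)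
             \<and> tie_key U R Z Gp (us i) (rs i) < tie_key U R Z Gp u r)
          \<or> (marg Z Gp u r = marg Z Gp (us i) (rs i)
             \<and> tie_key U R Z Gp (us i) (rs i) = tie_key U R Z Gp u r
             \<and> (us i < u \<or> (us i = u \<and> rs i < r)))))"

end

theory Submission imports Defs begin

definition pv :: "real \<Rightarrow> bool \<Rightarrow> bool \<Rightarrow> real \<Rightarrow> real \<Rightarrow> real" where
  "pv c x y A B = (if x \<and> y then A + (1-c)*B else if x then A else if y then B else 0)"

definition Zf :: "real \<Rightarrow> real \<Rightarrow> real \<Rightarrow> real \<Rightarrow> nat \<Rightarrow> nat \<Rightarrow> nat set \<Rightarrow> real" where
  "Zf c d s t n u S = (if u = 1 \<and> 0 \<in> S then 1/d else 0)
     + (\<Sum>k\<in>{k. k<n \<and> k mod 2 = u}. pv c (k\<in>S) (Suc k\<in>S) (s^k) (t*s^k))"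

lemma sum_Suc_delta:
  assumes "finite I"
  shows "(\<Sum>k\<in>I. if Suc k = r then g k else 0) = (if 0 < r \<and> r - 1 \<in> I then g (r-1) else (0::real))"
proof -
  have "(\<Sum>k\<in>I. if Suc k = r then g k else 0) = (\<Sum>k\<in>I. if k = r - 1 then (if 0 < r then g k else 0) else 0)"
    by (rule sum.cong) auto
  also have "\<dots> = (if r - 1 \<in> I then (if 0 < r then g (r-1) else 0) else 0)"
    using assms by (simp add: sum.delta)
  finally show ?thesis by auto
qed

lemma Z_ins:
  assumes "r \<notin> S"
  shows "Zf c d s t n u (insert r S) - Zf c d s t n u S =
     (if u=1 \<and> r=0 then 1/d else 0)
   + (if r<n \<and> r mod 2 = u then (if Suc r \<in> S then s^r - c*(t*s^r) else s^r) else 0)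
   + (if 0<r \<and> r-1<n \<and> (r-1) mod 2 = u then (if r-1 \<in> S then (1-c)*(t*s^(r-1)) else t*s^(r-1)) else 0)"
proof -
  let ?I = "{k. k<n \<and> k mod 2 = u}"
  have fin: "finite ?I" by simp
  define X where "X = (if Suc r \<in> S then s^r - c*(t*s^r) else s^r)"
  define Y where "Y = (\<lambda>k. if k \<in> S then (1-c)*(t*s^k) else t*s^k)"
  have "(\<Sum>k\<in>?I. pv c (k\<in>insert r S) (Suc k\<in>insert r S) (s^k) (t*s^k)) - (\<Sum>k\<in>?I. pv c (k\<in>S) (Suc k\<in>S) (s^k) (t*s^k))
     = (\<Sum>k\<in>?I. (if k = r then X else 0) + (if Suc k = r then Y k else 0))"
    unfolding sum_subtractf[symmetric]
    by (rule sum.cong) (use assms in \<open>auto simp: pv_def X_def Y_def algebra_simps\<close>)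
  also have "\<dots> = (if r \<in> ?I then X else 0) + (if 0 < r \<and> r - 1 \<in> ?I then Y (r-1) else 0)"
    by (simp add: sum.distrib sum.delta sum_Suc_delta[OF fin])
  finally have *: "(\<Sum>k\<in>?I. pv c (k\<in>insert r S) (Suc k\<in>insert r S) (s^k) (t*s^k)) - (\<Sum>k\<in>?I. pv c (k\<in>S) (Suc k\<in>S) (s^k) (t*s^k))
     = (if r \<in> ?I then X else 0) + (if 0 < r \<and> r - 1 \<in> ?I then Y (r-1) else 0)" .
  show ?thesis
    unfolding Zf_def using * assms by (auto simp: X_def Y_def)
qed


lemma pv_mono:
  assumes "x \<longrightarrow> x'" "y \<longrightarrow> y'" "0 \<le> B" "B \<le> A" "0 \<le> c" "c \<le> 1"
  shows "pv c x y A B \<le> pv c x' y' A B"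
proof -
  have "0 \<le> (1-c)*B" using assms by simp
  moreover have "c*B \<le> A" using assms by (metis mult_left_le_one_le order.trans)
  ultimately show ?thesis using assms unfolding pv_def by (auto simp: algebra_simps)
qed

context
  fixes c d s t :: real and n :: nat
  assumes c0: "0 \<le> c" and c1: "c \<le> 1" and d1: "1 \<le> d" and s0: "0 < s" and s1: "s < 1"
    and t0: "0 < t" and t1: "t < 1" and st: "(1-c)*t < s" and dst: "d*((1-c)*t) \<le> s" and n3: "3 \<le> n"
begin

abbreviation "Z \<equiv> Zf c d s t n"

lemma Z_empty: "Z u {} = 0" by (simp add: Zf_def pv_def)

lemma Z_single: "r < n \<Longrightarrow> Z u {r} = (if u=1 \<and> r=0 then 1/d else 0) + (if r mod 2 = u then s^r else 0)
    + (if 0<r \<and> (r-1) mod 2 = u then t*s^(r-1) else 0)"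
proof -
  assume r: "r < n"
  have "Z u {r} = Z u (insert r {}) - Z u {}" using Z_empty by simp
  also have "\<dots> = (if u=1 \<and> r=0 then 1/d else 0) + (if r mod 2 = u then s^r else 0)
    + (if 0<r \<and> (r-1) mod 2 = u then t*s^(r-1) else 0)"
    unfolding Z_ins[of r "{}" c d s t n u, simplified] using r by auto
  finally show ?thesis .
qed

lemma marg_lb:
  assumes "r \<notin> S" "r < n"
  shows "(1-c) * Z u {r} \<le> Z u (insert r S) - Z u S"
proof -
  have p: "0 < s^k" for k using s0 by simp
  have a: "(1-c) * s^r \<le> s^r - c*(t*s^r)"
  proof -
    have "c*(t*s^r) \<le> c * s^r" using c0 t1 p[of r] by (intro mult_left_mono) auto
    thus ?thesis by (simp add: algebra_simps)
  qed
  have b: "(1-c) * s^r \<le> s^r" using c0 p[of r] by (simp add: algebra_simps)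
  have e: "(1-c) * (t*s^(r-1)) \<le> t*s^(r-1)" using c0 t0 p[of "r-1"] by (simp add: algebra_simps)
  have f: "(1-c) * (1/d) \<le> 1/d" by (rule mult_left_le_one_le) (use c0 c1 d1 in auto)
  show ?thesis
    unfolding Z_ins[OF assms(1)] Z_single[OF assms(2)] distrib_left
    using a b e f assms by (intro add_mono) auto
qed

lemma Z_mono_submod: "mono_submod {..<n} (Z u)"
  unfolding mono_submod_def
proof (intro conjI allI impI)
  show "Z u {} = 0" by (rule Z_empty)
next
  fix S T assume "S \<subseteq> T \<and> T \<subseteq> {..<n}"
  hence ST: "S \<subseteq> T" by auto
  have "pv c (k\<in>S) (Suc k\<in>S) (s^k) (t*s^k) \<le> pv c (k\<in>T) (Suc k\<in>T) (s^k) (t*s^k)" for k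
    using ST s0 t0 t1 c0 c1 by (intro pv_mono) (auto intro: mult_left_le_one_le)
  hence "(\<Sum>k\<in>{k. k<n \<and> k mod 2 = u}. pv c (k\<in>S) (Suc k\<in>S) (s^k) (t*s^k))
      \<le> (\<Sum>k\<in>{k. k<n \<and> k mod 2 = u}. pv c (k\<in>T) (Suc k\<in>T) (s^k) (t*s^k))"
    by (intro sum_mono)
  moreover have "(if u = 1 \<and> 0 \<in> S then 1/d else 0) \<le> (if u = 1 \<and> 0 \<in> T then 1/d else 0)"
    using ST d1 by auto
  ultimately show "Z u S \<le> Z u T" unfolding Zf_def by linarith
next
  fix S T r assume as: "S \<subseteq> T \<and> T \<subseteq> {..<n} \<and> r \<in> {..<n} \<and> r \<notin> T"
  hence rS: "r \<notin> S" and rT: "r \<notin> T" by auto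
  have p: "0 < s^k" for k using s0 by simp
  have x: "0 \<le> c*(t*s^r)" using c0 t0 p[of r] by simp
  have y: "(1-c)*(t*s^(r-1)) \<le> t*s^(r-1)" using c0 t0 p[of "r-1"] by (simp add: algebra_simps)
  show "Z u (insert r T) - Z u T \<le> Z u (insert r S) - Z u S"
    unfolding Z_ins[OF rS] Z_ins[OF rT]
    using as x y by (intro add_mono) auto
qed


lemma curv: assumes "u \<in> {0,1}" shows "curvature {..<n} (Z u) = c"
proof -
  define C where "C = {(Z u (insert r S) - Z u S) / Z u {r} |S r.
       S \<subseteq> {..<n} \<and> r \<in> {..<n} \<and> r \<notin> S \<and> Z u {r} > 0}"
  have fin: "finite C"
  proof (rule finite_subset)
    show "C \<subseteq> (\<lambda>(S,r). (Z u (insert r S) - Z u S) / Z u {r}) ` (Pow {..<n} \<times> {..<n})"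
      unfolding C_def by auto
  qed auto
  have lb: "1 - c \<le> y" if "y \<in> C" for y
  proof -
    obtain S r where y: "y = (Z u (insert r S) - Z u S) / Z u {r}" and h: "S \<subseteq> {..<n}" "r < n" "r \<notin> S" "Z u {r} > 0"
      using \<open>y \<in> C\<close> unfolding C_def by auto
    show ?thesis unfolding y using marg_lb[OF h(3) h(2), of u] h(4) by (simp add: pos_le_divide_eq)
  qed
  have mem: "1 - c \<in> C"
  proof (cases "u = 0")
    case True
    have z1: "Z u {1} = t" using Z_single[of 1 u] n3 True by simp
    have m: "Z u (insert 1 {0}) - Z u {0} = (1-c)*t" using Z_ins[of 1 "{0}" c d s t n u] n3 True by simp
    have "(Z u (insert 1 {0}) - Z u {0}) / Z u {1} \<in> C" unfolding C_def using z1 t0 n3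
      by (intro CollectI exI[of _ "{0::nat}"] exI[of _ "1::nat"]) auto
    then show ?thesis using m z1 t0 s0 by simp
  next
    case False
    hence u1: "u = 1" using assms by auto
    have z1: "Z u {2} = t*s" using Z_single[of 2 u] n3 u1 by simp
    have m: "Z u (insert 2 {1}) - Z u {1} = (1-c)*(t*s)" using Z_ins[of 2 "{1}" c d s t n u] n3 u1 by simp
    have "t*s > 0" using t0 s0 by simp
    have "(Z u (insert 2 {1}) - Z u {1}) / Z u {2} \<in> C" unfolding C_def using z1 \<open>t*s>0\<close> n3
      by (intro CollectI exI[of _ "{1::nat}"] exI[of _ "2::nat"]) auto
    then show ?thesis using m z1 \<open>t*s>0\<close> s0 t0 by simp
  qed
  have "Min C = 1 - c" using fin lb mem by (intro Min_eqI) auto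
  thus ?thesis unfolding curvature_def C_def by simp
qed

definition us :: "nat \<Rightarrow> nat" where "us j = (j - 1) mod 2"
definition rs :: "nat \<Rightarrow> nat" where "rs j = j - 1"

lemma alloc_pre: "alloc_of (prefix us rs m) u = {k. k<m \<and> k mod 2 = u}"
proof -
  have "(u, k) \<in> prefix us rs m \<longleftrightarrow> k < m \<and> k mod 2 = u" for k
  proof
    assume "(u, k) \<in> prefix us rs m"
    then show "k < m \<and> k mod 2 = u" unfolding prefix_def us_def rs_def by auto
  next
    assume "k < m \<and> k mod 2 = u"
    then show "(u, k) \<in> prefix us rs m" unfolding prefix_def us_def rs_def
      by (auto intro!: exI[of _ "Suc k"])
  qed
  thus ?thesis unfolding alloc_of_def by auto
qed

lemma allocated_pre: "allocated (prefix us rs m) = {..<m}"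
proof -
  have "k \<in> allocated (prefix us rs m) \<longleftrightarrow> k < m" for k
  proof
    assume "k \<in> allocated (prefix us rs m)"
    then obtain u where "(u,k) \<in> prefix us rs m" unfolding allocated_def by force
    hence "k \<in> alloc_of (prefix us rs m) u" unfolding alloc_of_def by simp
    thus "k < m" using alloc_pre by simp
  next
    assume "k < m"
    hence "k \<in> alloc_of (prefix us rs m) (k mod 2)" using alloc_pre by simp
    thus "k \<in> allocated (prefix us rs m)" unfolding alloc_of_def allocated_def
      by (force intro: rev_image_eqI)
  qed
  thus ?thesis by auto
qed

lemma marg_step:
  assumes "m \<le> r" "r < n"
  shows "marg Z (prefix us rs m) u r = (if u=1 \<and> r=0 then 1/d else 0) + (if r mod 2 = u then s^r else 0)
    + (if 0<r \<and> (r-1) mod 2 = u then (if r = m then (1-c)*(t*s^(r-1)) else t*s^(r-1)) else 0)"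
proof -
  have rn: "r \<notin> {k. k<m \<and> k mod 2 = u}" using assms by auto
  show ?thesis unfolding marg_def alloc_pre Z_ins[OF rn] using assms by auto
qed


lemma par: "0 < m \<Longrightarrow> (m - 1) mod 2 \<noteq> (m::nat) mod 2"
  by (cases m) (auto simp: mod_Suc)

lemma marg_chosen: "m < n \<Longrightarrow> marg Z (prefix us rs m) (m mod 2) m = s^m"
  using marg_step[of m m "m mod 2"] par[of m] by auto

lemma marg_other: "m < n \<Longrightarrow> marg Z (prefix us rs m) (1 - m mod 2) m = (if m = 0 then 1/d else (1-c)*(t*s^(m-1)))"
  using marg_step[of m m "1 - m mod 2"] par[of m] by (auto simp: mod_Suc)

lemma marg_later:
  assumes "m < r" "r < n" "u \<in> {0,1}"
  shows "marg Z (prefix us rs m) u r < s^m"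
proof -
  have a: "s^r < s^m" using assms s0 s1 by (intro power_strict_decreasing) auto
  have b: "t*s^(r-1) < s^m"
  proof -
    have "t*s^(r-1) < s^(r-1)" using t1 s0 by simp
    also have "s^(r-1) \<le> s^m" using assms s0 s1 by (intro power_decreasing) auto
    finally show ?thesis .
  qed
  show ?thesis
  proof (cases "r mod 2 = u")
    case True
    then show ?thesis using marg_step[of m r u] assms par[of r] a by auto
  next
    case False
    then have "(r-1) mod 2 = u" using assms par[of r] by auto
    then show ?thesis using marg_step[of m r u] assms False b by auto
  qed
qed

lemma tk_gen: "u \<in> {0,1} \<Longrightarrow> tie_key {0,1} {..<n} Z S u r = c + marg Z S (1-u) r / marg Z S u r"
proof -
  assume u: "u \<in> {0,1}"
  have "{0,1} - {u} = {1-u}" using u by auto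
  thus ?thesis unfolding tie_key_def dratio_def using curv[OF u] by simp
qed

lemma greedy: "greedy_m_run {0,1} {..<n} Z us rs"
  unfolding greedy_m_run_def Let_def
proof (intro ballI)
  fix i assume "i \<in> {1..card {..<n}}"
  then obtain m where i: "i = Suc m" and m: "m < n" by (cases i) auto
  have usi: "us i = m mod 2" and rsi: "rs i = m" and im: "i - 1 = m" unfolding i us_def rs_def by simp_all
  have key: "\<forall>u\<in>{0,1}. \<forall>r\<in>{..<n} - {..<m}. (u, r) \<noteq> (m mod 2, m) \<longrightarrow>
          marg Z (prefix us rs m) u r < marg Z (prefix us rs m) (m mod 2) m
          \<or> (marg Z (prefix us rs m) u r = marg Z (prefix us rs m) (m mod 2) m
             \<and> tie_key {0,1} {..<n} Z (prefix us rs m) (m mod 2) m < tie_key {0,1} {..<n} Z (prefix us rs m) u r)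
          \<or> (marg Z (prefix us rs m) u r = marg Z (prefix us rs m) (m mod 2) m
             \<and> tie_key {0,1} {..<n} Z (prefix us rs m) (m mod 2) m = tie_key {0,1} {..<n} Z (prefix us rs m) u r
             \<and> (m mod 2 < u \<or> (m mod 2 = u \<and> m < r)))"
  proof (intro ballI impI)
    fix u r assume u: "u \<in> {0,1}" and r: "r \<in> {..<n} - {..<m}" and ne: "(u, r) \<noteq> (m mod 2, m)"
    show "marg Z (prefix us rs m) u r < marg Z (prefix us rs m) (m mod 2) m
          \<or> (marg Z (prefix us rs m) u r = marg Z (prefix us rs m) (m mod 2) m
             \<and> tie_key {0,1} {..<n} Z (prefix us rs m) (m mod 2) m < tie_key {0,1} {..<n} Z (prefix us rs m) u r)
          \<or> (marg Z (prefix us rs m) u r = marg Z (prefix us rs m) (m mod 2) m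
             \<and> tie_key {0,1} {..<n} Z (prefix us rs m) (m mod 2) m = tie_key {0,1} {..<n} Z (prefix us rs m) u r
             \<and> (m mod 2 < u \<or> (m mod 2 = u \<and> m < r)))"
    proof (cases "r = m")
      case False
      hence "m < r" using r by auto
      then show ?thesis using marg_later[of m r u] marg_chosen[OF m] r u by auto
    next
      case True
      hence uo: "u = 1 - m mod 2" using ne u by auto
      show ?thesis
      proof (cases "m = 0")
        case m0: True
        have mo: "marg Z (prefix us rs m) u r = 1/d" using marg_other[OF m] uo True m0 by simp
        have mc: "marg Z (prefix us rs m) (m mod 2) m = 1" using marg_chosen[OF m] m0 by simp
        show ?thesis
        proof (cases "d = 1")
          case False
          hence "1/d < 1" using d1 by simp
          then show ?thesis using mo mc by simp
        next
          case d: True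
          have u1: "u = 1" using uo m0 by simp
          have "tie_key {0,1} {..<n} Z (prefix us rs m) (m mod 2) m = tie_key {0,1} {..<n} Z (prefix us rs m) u r"
            using tk_gen[of "m mod 2" "prefix us rs m" m] tk_gen[of u "prefix us rs m" r] mo mc u1 m0 True d
            by simp
          then show ?thesis using mo mc d u1 m0 by simp
        qed
      next
        case False
        have mo: "marg Z (prefix us rs m) u r = (1-c)*(t*s^(m-1))" using marg_other[OF m] uo True False by simp
        have "((1-c)*t)*s^(m-1) < s * s^(m-1)" by (rule mult_strict_right_mono) (use st s0 in auto)
        hence "(1-c)*(t*s^(m-1)) < s * s^(m-1)" by (simp add: mult.assoc)
        also have "s * s^(m-1) = s^m" using False by (cases m) auto
        finally show ?thesis using mo marg_chosen[OF m] by simp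
      qed
    qed
  qed
  show "us i \<in> {0,1} \<and> rs i \<in> {..<n} \<and> rs i \<notin> allocated (prefix us rs (i - 1)) \<and>
       (\<forall>u\<in>{0,1}. \<forall>r\<in>{..<n} - allocated (prefix us rs (i - 1)). (u, r) \<noteq> (us i, rs i) \<longrightarrow>
          marg Z (prefix us rs (i - 1)) u r < marg Z (prefix us rs (i - 1)) (us i) (rs i) \<or>
          marg Z (prefix us rs (i - 1)) u r = marg Z (prefix us rs (i - 1)) (us i) (rs i) \<and>
          tie_key {0,1} {..<n} Z (prefix us rs (i - 1)) (us i) (rs i) < tie_key {0,1} {..<n} Z (prefix us rs (i - 1)) u r \<or>
          marg Z (prefix us rs (i - 1)) u r = marg Z (prefix us rs (i - 1)) (us i) (rs i) \<and>
          tie_key {0,1} {..<n} Z (prefix us rs (i - 1)) (us i) (rs i) = tie_key {0,1} {..<n} Z (prefix us rs (i - 1)) u r \<and>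
          (us i < u \<or> us i = u \<and> rs i < r))"
    unfolding usi rsi im allocated_pre using key m by auto
qed


lemma maxkey: "Max ((\<lambda>i. tie_key {0,1} {..<n} Z (prefix us rs (i - 1)) (us i) (rs i)) ` {1..card {..<n}}) = c + 1/d"
proof (rule Max_eqI)
  show "finite ((\<lambda>i. tie_key {0,1} {..<n} Z (prefix us rs (i - 1)) (us i) (rs i)) ` {1..card {..<n}})" by simp
next
  have k: "tie_key {0,1} {..<n} Z (prefix us rs m) (m mod 2) m = c + (if m = 0 then 1/d else (1-c)*(t*s^(m-1))) / s^m"
    if "m < n" for m
  proof -
    have mm: "m mod 2 \<in> {0,1::nat}" by auto
    show ?thesis unfolding tk_gen[OF mm] marg_other[OF that] marg_chosen[OF that] by (rule refl)
  qed
  fix y assume "y \<in> (\<lambda>i. tie_key {0,1} {..<n} Z (prefix us rs (i - 1)) (us i) (rs i)) ` {1..card {..<n}}"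
  then obtain i where i: "i \<in> {1..n}" and y: "y = tie_key {0,1} {..<n} Z (prefix us rs (i - 1)) (us i) (rs i)" by auto
  then obtain m where im: "i = Suc m" and m: "m < n" by (cases i) auto
  have y2: "y = c + (if m = 0 then 1/d else (1-c)*(t*s^(m-1))) / s^m"
    using y k[OF m] im by (simp add: us_def rs_def)
  show "y \<le> c + 1/d"
  proof (cases "m = 0")
    case True then show ?thesis using y2 by simp
  next
    case False
    have sm: "s^m = s^(m-1) * s" using False by (cases m) auto
    have p: "0 < s^(m-1)" using s0 by simp
    have "(1-c)*(t*s^(m-1)) / s^m = (1-c)*t / s" unfolding sm using p s0 by (simp add: field_simps)
    also have "\<dots> \<le> 1/d" using s0 d1 dst by (simp add: field_simps mult.commute)
    finally show ?thesis using y2 False by simp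
  qed
next
  have "tie_key {0,1} {..<n} Z (prefix us rs 0) 0 0 = c + 1/d"
    using tk_gen[of 0 "prefix us rs 0" 0] marg_other[of 0] marg_chosen[of 0] n3 by simp
  moreover have "(1::nat) \<in> {1..card {..<n}}" using n3 by simp
  ultimately show "c + 1/d \<in> (\<lambda>i. tie_key {0,1} {..<n} Z (prefix us rs (i - 1)) (us i) (rs i)) ` {1..card {..<n}}"
    by (force simp: us_def rs_def intro: rev_image_eqI[of 1])
qed

lemma split_sum: "(\<Sum>k\<in>{k. k<n \<and> k mod 2 = 0}. f k) + (\<Sum>k\<in>{k. k<n \<and> k mod 2 = 1}. f k) = (\<Sum>k<n. (f k::real))"
proof -
  have "{..<n} = {k. k<n \<and> k mod 2 = 0} \<union> {k. k<n \<and> k mod 2 = 1}" by auto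
  moreover have "{k. k<n \<and> k mod 2 = 0} \<inter> {k. k<n \<and> k mod 2 = 1} = {}" by auto
  ultimately show ?thesis by (simp add: sum.union_disjoint[symmetric])
qed

lemma Z_own: "u \<in> {0,1} \<Longrightarrow> Z u {k. k<n \<and> k mod 2 = u} = (\<Sum>k\<in>{k. k<n \<and> k mod 2 = u}. s^k)"
  unfolding Zf_def by (auto simp: pv_def mod_Suc intro!: sum.cong)

lemma Z_oth: "u \<in> {0,1} \<Longrightarrow> Z u {k. k<n \<and> k mod 2 = 1 - u}
   = (if u = 1 then 1/d else 0) + (\<Sum>k\<in>{k. k<n \<and> k mod 2 = u}. if Suc k < n then t*s^k else 0)"
  unfolding Zf_def using n3 by (auto simp: pv_def mod_Suc intro!: sum.cong)

lemma tv: "total_val {0,1} Z S = Z 0 (alloc_of S 0) + Z 1 (alloc_of S 1)"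
  unfolding total_val_def by simp

definition Om :: "nat \<Rightarrow> (nat \<times> nat) set" where "Om m = {(u,k). k<m \<and> u = 1 - k mod 2}"

lemma alloc_Om: "u \<in> {0,1} \<Longrightarrow> alloc_of (Om n) u = {k. k<n \<and> k mod 2 = 1 - u}"
  unfolding alloc_of_def Om_def by auto

lemma ZG: "total_val {0,1} Z (prefix us rs n) = (\<Sum>k<n. s^k)"
  unfolding tv alloc_pre using Z_own[of 0] Z_own[of 1] split_sum[of "\<lambda>k. s^k"] by simp

lemma ZOm: "total_val {0,1} Z (Om n) = 1/d + t * (\<Sum>k<n-1. s^k)"
proof -
  have "total_val {0,1} Z (Om n) = 1/d + (\<Sum>k<n. if Suc k < n then t*s^k else 0)"
    unfolding tv using alloc_Om[of 0] alloc_Om[of 1] Z_oth[of 0] Z_oth[of 1]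
      split_sum[of "\<lambda>k. if Suc k < n then t*s^k else 0"] by simp
  also have "(\<Sum>k<n. if Suc k < n then t*s^k else 0) = (\<Sum>k<n-1. t*s^k)"
  proof -
    obtain n' where nn: "n = Suc n'" using n3 by (cases n) auto
    have "(\<Sum>k<n. if Suc k < n then t*s^k else 0) = (\<Sum>k<n'. if Suc k < n then t*s^k else 0)"
      unfolding nn by simp
    also have "\<dots> = (\<Sum>k<n'. t*s^k)" by (rule sum.cong) (auto simp: nn)
    finally show ?thesis using nn by simp
  qed
  finally show ?thesis by (simp add: sum_distrib_left)
qed

lemma Om_part: "is_partition {0,1} {..<n} (Om n)"
  unfolding is_partition_def Om_def by auto

lemma opt_exists: "\<exists>\<Omega>. is_optimal {0,1} {..<n} Z \<Omega> \<and> total_val {0,1} Z (Om n) \<le> total_val {0,1} Z \<Omega>"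
proof -
  define P where "P = {S. is_partition {0,1} {..<n} S}"
  have fin: "finite P"
    by (rule finite_subset[of _ "Pow ({0,1} \<times> {..<n})"]) (auto simp: P_def is_partition_def)
  have ne: "Om n \<in> P" using Om_part by (simp add: P_def)
  define M where "M = Max (total_val {0,1} Z ` P)"
  have "M \<in> total_val {0,1} Z ` P" unfolding M_def using fin ne by (intro Max_in) auto
  then obtain \<Omega> where \<Omega>: "\<Omega> \<in> P" "total_val {0,1} Z \<Omega> = M" by auto
  have ge: "total_val {0,1} Z S \<le> M" if "S \<in> P" for S
    unfolding M_def using fin that by (intro Max_ge) auto
  show ?thesis
    using \<Omega> ge ne unfolding is_optimal_def by (auto simp: P_def)
qed

lemma final_ctx:
  assumes B: "(\<Sum>k<n. s^k) / (1/d + t*(\<Sum>k<n-1. s^k)) \<le> B"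
  shows "\<exists>(U::nat set) (R::nat set) (Z::nat \<Rightarrow> nat set \<Rightarrow> real) (us::nat \<Rightarrow> nat) (rs::nat \<Rightarrow> nat)
            (\<Omega>::(nat \<times> nat) set).
           finite R \<and> card U = 2
         \<and> (\<forall>u\<in>U. mono_submod R (Z u) \<and> (\<exists>r\<in>R. Z u {r} > 0) \<and> curvature R (Z u) = c)
         \<and> greedy_m_run U R Z us rs
         \<and> Max ((\<lambda>i. tie_key U R Z (prefix us rs (i - 1)) (us i) (rs i)) ` {1..card R}) = c + 1 / d
         \<and> is_optimal U R Z \<Omega>
         \<and> total_val U Z (prefix us rs (card R)) / total_val U Z \<Omega> \<le> B"
proof -
  obtain \<Omega> where o: "is_optimal {0,1} {..<n} Z \<Omega>" and og: "total_val {0,1} Z (Om n) \<le> total_val {0,1} Z \<Omega>"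
    using opt_exists by blast
  have pos: "\<forall>u\<in>{0::nat,1}. \<exists>r\<in>{..<n}. Z u {r} > 0"
  proof
    fix u :: nat assume "u \<in> {0,1}"
    hence "Z u {0} > 0" using Z_single[of 0 u] n3 d1 by auto
    thus "\<exists>r\<in>{..<n}. Z u {r} > 0" using n3 by (intro bexI[of _ 0]) auto
  qed
  have sp: "0 \<le> (\<Sum>k<n. s^k)" using s0 by (intro sum_nonneg) simp
  have op: "0 < total_val {0,1} Z (Om n)" unfolding ZOm using d1 t0 s0
    by (intro add_pos_nonneg) (auto intro!: sum_nonneg mult_nonneg_nonneg)
  have "total_val {0,1} Z (prefix us rs n) / total_val {0,1} Z \<Omega> \<le> total_val {0,1} Z (prefix us rs n) / total_val {0,1} Z (Om n)"
    unfolding ZG using og op sp by (intro divide_left_mono) auto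
  also have "\<dots> \<le> B" unfolding ZG ZOm by (rule B)
  finally have r: "total_val {0,1} Z (prefix us rs n) / total_val {0,1} Z \<Omega> \<le> B" .
  show ?thesis
    apply (rule exI[of _ "{0,1}"], rule exI[of _ "{..<n}"], rule exI[of _ Z], rule exI[of _ us], rule exI[of _ rs], rule exI[of _ \<Omega>])
    using Z_mono_submod curv pos greedy maxkey o r by auto
qed

end

theorem lemma2:
  fixes c d \<delta> :: real
  assumes "0 < c" and "c \<le> 1" and "1 \<le> d" and "c = 1 \<or> d < 1 / (1 - c)" and "0 < \<delta>"
  shows "\<exists>(U::nat set) (R::nat set) (Z::nat \<Rightarrow> nat set \<Rightarrow> real) (us::nat \<Rightarrow> nat) (rs::nat \<Rightarrow> nat)
            (\<Omega>::(nat \<times> nat) set).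
           finite R \<and> card U = 2
         \<and> (\<forall>u\<in>U. mono_submod R (Z u) \<and> (\<exists>r\<in>R. Z u {r} > 0) \<and> curvature R (Z u) = c)
         \<and> greedy_m_run U R Z us rs
         \<and> Max ((\<lambda>i. tie_key U R Z (prefix us rs (i - 1)) (us i) (rs i)) ` {1..card R}) = c + 1 / d
         \<and> is_optimal U R Z \<Omega>
         \<and> total_val U Z (prefix us rs (card R)) / total_val U Z \<Omega> \<le> 1 / (c + 1 / d) + \<delta>"
proof -
  define L where "L = c + 1/d"
  have dpos: "0 < d" using assms by simp
  have L0: "0 < L" using assms dpos by (simp add: L_def add_pos_pos)
  define \<kappa> where "\<kappa> = \<delta>*L^2/(1+\<delta>*L)"
  have dL: "0 < 1 + \<delta>*L" using L0 assms(5) by (simp add: add_pos_pos)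
  have k0: "0 < \<kappa>" using L0 assms(5) dL by (simp add: \<kappa>_def)
  have aux: "0 < L + L*(L*\<delta>)" using L0 assms(5) by (intro add_pos_pos) auto
  have kL: "(1/L + \<delta>) * (L - \<kappa>) = 1" unfolding \<kappa>_def using L0 dL aux by (simp add: field_simps power2_eq_square)
  define q where "q = d*(1-c)"
  have q0: "0 \<le> q" using assms by (simp add: q_def)
  have q1: "q < 1"
  proof (cases "c = 1")
    case True thus ?thesis by (simp add: q_def)
  next
    case False
    hence c1: "0 < 1 - c" using assms by simp
    have "d < 1/(1-c)" using assms(4) False by simp
    thus ?thesis using c1 by (simp add: q_def field_simps)
  qed
  have dd: "0 < 2*(1+1/d)" using dpos by (simp add: add_pos_pos)
  define \<eta> where "\<eta> = min (\<kappa>/(2*(1+1/d))) ((1-q)/2)"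
  have e0: "0 < \<eta>" using k0 q1 dd by (simp add: \<eta>_def)
  have e1: "\<eta> \<le> (1-q)/2" unfolding \<eta>_def by (rule min.cobounded2)
  have "\<eta> \<le> \<kappa>/(2*(1+1/d))" unfolding \<eta>_def by (rule min.cobounded1)
  hence "\<eta> * (2*(1+1/d)) \<le> \<kappa>" using dd by (simp add: le_divide_eq)
  hence e2: "\<eta>*(1+1/d) \<le> \<kappa>/2" by (simp add: algebra_simps)
  define s where "s = q + \<eta>"
  define t where "t = 1 - \<eta>"
  have s0: "0 < s" using q0 e0 by (simp add: s_def)
  have s1: "s < 1" using e1 q1 by (simp add: s_def)
  have t0: "0 < t" using e1 q0 q1 by (simp add: t_def)
  have t1: "t < 1" using e0 by (simp add: t_def)
  have "(1-c)*t \<le> 1 - c" using assms(2) t0 t1 by (intro mult_right_le_one_le) auto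
  also have "1 - c \<le> q" unfolding q_def using mult_right_mono[of 1 d "1-c"] assms(2,3) by simp
  also have "q < s" using e0 by (simp add: s_def)
  finally have st: "(1-c)*t < s" .
  have "d*((1-c)*t) = q*t" by (simp add: q_def)
  also have "\<dots> \<le> q" using q0 t0 t1 by (intro mult_right_le_one_le) auto
  also have "q \<le> s" using e0 by (simp add: s_def)
  finally have dst: "d*((1-c)*t) \<le> s" .
  obtain N where N: "s^N < \<kappa>/2" using real_arch_pow_inv[of "\<kappa>/2" s] k0 s1 by auto
  define n where "n = N + 3"
  have n3: "3 \<le> n" by (simp add: n_def)
  have sn: "s^(n-1) \<le> s^N" using s0 s1 by (intro power_decreasing) (auto simp: n_def)
  define F where "F = (\<Sum>k<n. s^k)"
  define F' where "F' = (\<Sum>k<n-1. s^k)"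
  have F: "(1-s)*F = 1 - s^n" using one_diff_power_eq[of s n] by (simp add: F_def)
  have F': "(1-s)*F' = 1 - s^(n-1)" using one_diff_power_eq[of s "n-1"] by (simp add: F'_def)
  have F'0: "0 \<le> F'" unfolding F'_def using s0 by (intro sum_nonneg) simp
  define D where "D = 1/d + t*F'"
  have D0: "0 < D" unfolding D_def using dpos t0 F'0 by (simp add: add_pos_nonneg)
  have B0: "0 < 1/L + \<delta>" using L0 assms(5) by (simp add: add_pos_pos)
  have a: "(1-s)/d + t = L - \<eta>*(1+1/d)" unfolding s_def t_def q_def L_def using dpos by (simp add: field_simps)
  have b: "t*s^(n-1) \<le> s^(n-1)" using s0 t0 t1 by (intro mult_left_le_one_le) auto
  have cc: "t*(1 - s^(n-1)) = t - t*s^(n-1)" by (simp add: algebra_simps)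
  have lin: "L - \<kappa> \<le> (1-s)/d + t*(1 - s^(n-1))" using a b cc e2 sn N by linarith
  have "1 = (1/L + \<delta>) * (L - \<kappa>)" using kL by simp
  also have "\<dots> \<le> (1/L + \<delta>) * ((1-s)/d + t*(1 - s^(n-1)))" using B0 lin by (intro mult_left_mono) auto
  also have "\<dots> = (1-s)*((1/L+\<delta>)*D)" unfolding D_def F'[symmetric] using L0 dpos by (simp add: field_simps)
  finally have g1: "1 \<le> (1-s)*((1/L+\<delta>)*D)" .
  have "(1-s)*F \<le> 1" using F s0 by simp
  hence "(1-s)*F \<le> (1-s)*((1/L+\<delta>)*D)" using g1 by linarith
  hence "F \<le> (1/L+\<delta>)*D" using s1 by (simp add: mult_le_cancel_left_pos)
  hence ratio: "F / D \<le> 1/(c+1/d) + \<delta>" using D0 by (simp add: pos_divide_le_eq L_def)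
  show ?thesis
    by (rule final_ctx[of c d s t n]) (use assms dpos s0 s1 t0 t1 st dst n3 ratio in \<open>auto simp: F_def F'_def D_def\<close>)
qed

end
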